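(* Let $A=(a_{ij})\in M(m,\mathbb{C})$ and let $X_A$ be a complex algebra spanned by elements $\{x_{ij}:i,j=1,\ldots,m\}$ satisfying $x_{ij}x_{kl}=a_{jk}x_{il}$. If $X_A$ is semisimple and $\det A=0$, then the elements $\{x_{ij}:i,j=1,\ldots,m\}$ are linearly dependent. *)

theory Defs
  imports "HOL-Analysis.Analysis"
begin

text \<open>A (possibly non-unital) associative complex algebra: the carrier is the whole
  type 'a (an associative ring without unit), s is the complex scalar multiplication.\<close>
definition complex_algebra :: "(complex \<Rightarrow> 'a::ring \<Rightarrow> 'a) \<Rightarrow> bool" where
  "complex_algebra s \<longleftrightarrow> vector_space s \<and>
     (\<forall>c x y. s c (x * y) = s c x * y \<and> s c (x * y) = x * s c y)"

definition algebra_ideal :: "(complex \<Rightarrow> 'a::ring \<Rightarrow> 'a) \<Rightarrow> 'a set \<Rightarrow> bool" where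
  "algebra_ideal s I \<longleftrightarrow> module.subspace s I \<and>
     (\<forall>x\<in>I. \<forall>a. a * x \<in> I \<and> x * a \<in> I)"

text \<open>set_pow I n = set of all products of n+1 elements of I.\<close>
fun set_pow :: "'a::times set \<Rightarrow> nat \<Rightarrow> 'a set" where
  "set_pow I 0 = I"
| "set_pow I (Suc n) = {x * y | x y. x \<in> set_pow I n \<and> y \<in> I}"

definition nilpotent_set :: "'a::{times,zero} set \<Rightarrow> bool" where
  "nilpotent_set I \<longleftrightarrow> (\<exists>n. set_pow I n \<subseteq> {0})"

text \<open>Semisimple: the (Jacobson) radical, i.e. for a finite-dimensional algebra the
  largest nilpotent ideal, vanishes; equivalently there is no nonzero nilpotent ideal.\<close>
definition semisimple_algebra :: "(complex \<Rightarrow> 'a::ring \<Rightarrow> 'a) \<Rightarrow> bool" where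
  "semisimple_algebra s \<longleftrightarrow>
     (\<forall>I. algebra_ideal s I \<and> nilpotent_set I \<longrightarrow> I = {0})"

end

theory Submission
  imports Defs
begin

theorem corollary33:
  fixes A :: "complex^'n^'n"
    and x :: "'n \<Rightarrow> 'n \<Rightarrow> 'a::ring"
    and s :: "complex \<Rightarrow> 'a \<Rightarrow> 'a"
  assumes alg: "complex_algebra s"
    and span: "module.span s {x i j | i j. True} = UNIV"
    and rel: "\<forall>i j k l. x i j * x k l = s (A $ j $ k) (x i l)"
    and ss: "semisimple_algebra s"
    and det0: "det A = 0"
  shows "\<exists>c :: 'n \<Rightarrow> 'n \<Rightarrow> complex. (\<exists>i j. c i j \<noteq> 0) \<and>
           (\<Sum>i\<in>UNIV. \<Sum>j\<in>UNIV. s (c i j) (x i j)) = 0"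
proof -
  interpret V: vector_space s using alg unfolding complex_algebra_def by auto
  have comp: "\<And>c a b. s c (a * b) = s c a * b" "\<And>c a b. s c (a * b) = a * s c b"
    using alg unfolding complex_algebra_def by metis+
  have "det (transpose A) = 0" using det0 by simp
  then have "\<not> invertible (transpose A)" using invertible_det_nz by blast
  then obtain u where u0: "u \<noteq> 0" and uA: "transpose A *v u = 0"
    unfolding invertible_left_inverse matrix_left_invertible_ker by blast
  have hu: "(\<Sum>j\<in>UNIV. u$j * A$j$k) = 0" for k
  proof -
    have "(transpose A *v u) $ k = 0" using uA by simp
    then show ?thesis
      by (simp add: matrix_vector_mult_def transpose_def mult.commute)
  qed
  define i0 :: 'n where "i0 = undefined"
  define y where "y = (\<Sum>j\<in>UNIV. s (u$j) (x i0 j))"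
  have yx: "y * x k l = 0" for k l
  proof -
    have "y * x k l = (\<Sum>j\<in>UNIV. s (u$j) (x i0 j) * x k l)"
      unfolding y_def by (rule sum_distrib_right)
    also have "\<dots> = (\<Sum>j\<in>UNIV. s (u$j) (x i0 j * x k l))"
      by (simp add: comp(1))
    also have "\<dots> = (\<Sum>j\<in>UNIV. s (u$j * A$j$k) (x i0 l))"
      using rel by simp
    also have "\<dots> = s (\<Sum>j\<in>UNIV. u$j * A$j$k) (x i0 l)"
      by (rule V.scale_sum_left[symmetric])
    finally show ?thesis using hu by simp
  qed
  have yall: "y * b = 0" for b
  proof -
    have "b \<in> V.span {x i j | i j. True}" using span by simp
    then show ?thesis
    proof (induct rule: V.span_induct_alt)
      case base then show ?case by simp
    next
      case (step c a z)
      then obtain i j where "a = x i j" by blast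
      then show ?case using step yx by (simp add: distrib_left comp(2)[symmetric])
    qed
  qed
  define I :: "'a set" where "I = {a. \<forall>b. a * b = 0}"
  have "algebra_ideal s I"
    unfolding algebra_ideal_def V.subspace_def I_def
    by (auto simp: distrib_right comp(1)[symmetric] mult.assoc)
  moreover have "nilpotent_set I"
    unfolding nilpotent_set_def
    by (rule exI[of _ 1]) (auto simp: I_def)
  ultimately have "I = {0}" using ss unfolding semisimple_algebra_def by blast
  moreover have "y \<in> I" using yall I_def by simp
  ultimately have y0: "y = 0" by simp
  define c where "c = (\<lambda>i j. if i = i0 then u$j else 0)"
  obtain j where "u$j \<noteq> 0" using u0 by (metis vec_eq_iff zero_index)
  then have "c i0 j \<noteq> 0" by (simp add: c_def)
  moreover have "(\<Sum>i\<in>UNIV. \<Sum>j\<in>UNIV. s (c i j) (x i j)) = (\<Sum>i\<in>UNIV. if i = i0 then y else 0)"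
    by (rule sum.cong) (auto simp: c_def y_def)
  ultimately show ?thesis using y0 by auto
qed

end
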